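(* Let $\mathsf{F}(X)=X+(X\times X)$ and $\mathsf{B}=\mathcal{P}$ be the interaction and observation functors, and let $(X,f)$ be an $(\mathsf{F},\mathsf{B})$-dialgebra. An equivalence relation $\mathcal{R}\subseteq X\times X$ is the kernel $\{(x,y)\mid h(x)=h(y)\}$ of some homomorphism $h:(X,f)\to(Y,g)$ (for some $(\mathsf{F},\mathsf{B})$-dialgebra $(Y,g)$) if and only if for all $(x_1,x_2)\in\mathcal{R}$, $(y_1,y_2)\in\mathcal{R}$ and $z_1\in X$: (i) if $x_1\to z_1$ then there is $z_2$ with $x_2\to z_2$ and $(z_1,z_2)\in\mathcal{R}$; and (ii) if $(x_1,y_1)\to z_1$ then there is $z_2$ with $(x_2,y_2)\to z_2$ and $(z_1,z_2)\in\mathcal{R}$. As a corollary, the kernel of the canonical map of the bisimilarity quotient of $(X,f)$ (i.e. dialgebraic bisimilarity $\sim_f$) is the largest equivalence relation satisfying (i) and (ii).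
   Context: For functors $\mathsf{F},\mathsf{B}:\mathbf{Set}\to\mathbf{Set}$, an $(\mathsf{F},\mathsf{B})$-dialgebra is a pair $(X,f)$ with $X$ a set and $f:\mathsf{F}X\to\mathsf{B}X$ a function; a homomorphism $h:(X,f)\to(Y,g)$ is a function $h:X\to Y$ with $g\circ\mathsf{F}h=\mathsf{B}h\circ f$. The interaction functor is $\mathsf{F}(X)=X+(X\times X)$ with $\mathsf{F}h(x)=h(x)$ and $\mathsf{F}h(x,y)=(h(x),h(y))$; the observation functor is $\mathsf{B}(X)=\mathcal{P}(X)$ with $\mathsf{B}h(S)=h[S]$. Elements of $X$ and of $X\times X$ are regarded as elements of $\mathsf{F}X$ without coproduct tags. Notation: $x\to z$ means $z\in f(x)$, and $(x,y)\to z$ means $z\in f(x,y)$. Dialgebraic bisimilarity: $x\sim_f y$ iff some homomorphism out of $(X,f)$ identifies $x$ and $y$. The bisimilarity quotient of $(X,f)$ is the wide pushout in $\mathit{Dialg}(\mathsf{F},\mathsf{B})$ of all quotients (epimorphisms modulo isomorphism) of $(X,f)$, with canonical map the induced morphism out of $(X,f)$. *)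

theory Defs
  imports Main
begin

definition Fset :: "'a set \<Rightarrow> ('a + 'a \<times> 'a) set" where
  "Fset X = Inl ` X \<union> Inr ` (X \<times> X)"

definition Fmap :: "('a \<Rightarrow> 'b) \<Rightarrow> ('a + 'a \<times> 'a) \<Rightarrow> ('b + 'b \<times> 'b)" where
  "Fmap h = map_sum h (map_prod h h)"

definition dialg :: "'a set \<Rightarrow> (('a + 'a \<times> 'a) \<Rightarrow> 'a set) \<Rightarrow> bool" where
  "dialg X f \<longleftrightarrow> (\<forall>u\<in>Fset X. f u \<subseteq> X)"

definition dhom :: "'a set \<Rightarrow> (('a + 'a \<times> 'a) \<Rightarrow> 'a set) \<Rightarrow> 'b set \<Rightarrow> (('b + 'b \<times> 'b) \<Rightarrow> 'b set)
                   \<Rightarrow> ('a \<Rightarrow> 'b) \<Rightarrow> bool" where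
  "dhom X f Y g h \<longleftrightarrow> (\<forall>x\<in>X. h x \<in> Y) \<and> (\<forall>u\<in>Fset X. g (Fmap h u) = h ` (f u))"

definition kernel :: "'a set \<Rightarrow> ('a \<Rightarrow> 'b) \<Rightarrow> 'a rel" where
  "kernel X h = {(x, y). x \<in> X \<and> y \<in> X \<and> h x = h y}"

definition bisim_conds :: "'a set \<Rightarrow> (('a + 'a \<times> 'a) \<Rightarrow> 'a set) \<Rightarrow> 'a rel \<Rightarrow> bool" where
  "bisim_conds X f R \<longleftrightarrow>
    (\<forall>x1 x2 y1 y2 z1. (x1, x2) \<in> R \<longrightarrow> (y1, y2) \<in> R \<longrightarrow> z1 \<in> X \<longrightarrow>
       (z1 \<in> f (Inl x1) \<longrightarrow> (\<exists>z2. z2 \<in> f (Inl x2) \<and> (z1, z2) \<in> R)) \<and>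
       (z1 \<in> f (Inr (x1, y1)) \<longrightarrow> (\<exists>z2. z2 \<in> f (Inr (x2, y2)) \<and> (z1, z2) \<in> R)))"

text \<open>Codomains are taken with carrier of type 'a set set (every homomorphic image of X
  fits in such a type, so this loses no generality).\<close>
definition dbisim :: "'a set \<Rightarrow> (('a + 'a \<times> 'a) \<Rightarrow> 'a set) \<Rightarrow> 'a rel" where
  "dbisim X f = {(x, y). x \<in> X \<and> y \<in> X \<and>
     (\<exists>(Y :: 'a set set) g h. dialg Y g \<and> dhom X f Y g h \<and> h x = h y)}"

end

theory Submission
  imports Defs
begin

lemma kernel_conds:
  assumes fX: "dialg X f" and hom: "dhom X f Y g h"
  shows "bisim_conds X f (kernel X h)"
  unfolding bisim_conds_def
proof (intro allI impI conjI)
  fix x1 x2 y1 y2 z1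
  assume x: "(x1, x2) \<in> kernel X h" and y: "(y1, y2) \<in> kernel X h" and z: "z1 \<in> X"
  from x y have xs: "x1 \<in> X" "x2 \<in> X" "h x1 = h x2" "y1 \<in> X" "y2 \<in> X" "h y1 = h y2"
    by (auto simp: kernel_def)
  have F1: "Inl x1 \<in> Fset X" "Inl x2 \<in> Fset X" "Inr (x1,y1) \<in> Fset X" "Inr (x2,y2) \<in> Fset X"
    using xs by (auto simp: Fset_def)
  {
    assume z1: "z1 \<in> f (Inl x1)"
    have "h z1 \<in> h ` f (Inl x1)" using z1 by blast
    also have "h ` f (Inl x1) = g (Fmap h (Inl x1))" using hom F1 by (simp add: dhom_def)
    also have "\<dots> = g (Fmap h (Inl x2))" using xs by (simp add: Fmap_def)
    also have "\<dots> = h ` f (Inl x2)" using hom F1 by (simp add: dhom_def)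
    finally obtain z2 where "z2 \<in> f (Inl x2)" "h z1 = h z2" by auto
    moreover have "z2 \<in> X" using fX F1 \<open>z2 \<in> f (Inl x2)\<close> by (auto simp: dialg_def)
    ultimately show "\<exists>z2. z2 \<in> f (Inl x2) \<and> (z1, z2) \<in> kernel X h"
      using z by (auto simp: kernel_def)
  }
  {
    assume z1: "z1 \<in> f (Inr (x1,y1))"
    have "h z1 \<in> h ` f (Inr (x1,y1))" using z1 by blast
    also have "h ` f (Inr (x1,y1)) = g (Fmap h (Inr (x1,y1)))" using hom F1 by (simp add: dhom_def)
    also have "\<dots> = g (Fmap h (Inr (x2,y2)))" using xs by (simp add: Fmap_def)
    also have "\<dots> = h ` f (Inr (x2,y2))" using hom F1 by (simp add: dhom_def)
    finally obtain z2 where "z2 \<in> f (Inr (x2,y2))" "h z1 = h z2" by auto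
    moreover have "z2 \<in> X" using fX F1 \<open>z2 \<in> f (Inr (x2,y2))\<close> by (auto simp: dialg_def)
    ultimately show "\<exists>z2. z2 \<in> f (Inr (x2,y2)) \<and> (z1, z2) \<in> kernel X h"
      using z by (auto simp: kernel_def)
  }
qed

lemma kernel_equiv: "equiv X (kernel X h)"
  unfolding equiv_def refl_on_def sym_def trans_def kernel_def by auto

lemma quot_img_Inl:
  assumes fX: "dialg X f" and R: "equiv X R" and c: "bisim_conds X f R" and ab: "(a,b) \<in> R"
  shows "(\<lambda>x. R``{x}) ` f (Inl a) \<subseteq> (\<lambda>x. R``{x}) ` f (Inl b)"
proof
  fix w assume "w \<in> (\<lambda>x. R``{x}) ` f (Inl a)"
  then obtain z1 where z1: "z1 \<in> f (Inl a)" "w = R``{z1}" by auto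
  have aX: "a \<in> X" using R ab by (simp add: equiv_class_eq_iff)
  then have "z1 \<in> X" using fX z1 by (auto simp: dialg_def Fset_def)
  then obtain z2 where "z2 \<in> f (Inl b)" "(z1,z2) \<in> R"
    using c ab z1 unfolding bisim_conds_def by blast
  then show "w \<in> (\<lambda>x. R``{x}) ` f (Inl b)" using z1 R by (auto simp: equiv_class_eq_iff)
qed

lemma quot_img_Inr:
  assumes fX: "dialg X f" and R: "equiv X R" and c: "bisim_conds X f R" and ab: "(a,b) \<in> R"
    and cd: "(a',b') \<in> R"
  shows "(\<lambda>x. R``{x}) ` f (Inr (a,a')) \<subseteq> (\<lambda>x. R``{x}) ` f (Inr (b,b'))"
proof
  fix w assume "w \<in> (\<lambda>x. R``{x}) ` f (Inr (a,a'))"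
  then obtain z1 where z1: "z1 \<in> f (Inr (a,a'))" "w = R``{z1}" by auto
  have aX: "a \<in> X" "a' \<in> X" using R ab cd by (simp_all add: equiv_class_eq_iff)
  then have "z1 \<in> X" using fX z1 by (auto simp: dialg_def Fset_def)
  then obtain z2 where "z2 \<in> f (Inr (b,b'))" "(z1,z2) \<in> R"
    using c ab cd z1 unfolding bisim_conds_def by blast
  then show "w \<in> (\<lambda>x. R``{x}) ` f (Inr (b,b'))" using z1 R by (auto simp: equiv_class_eq_iff)
qed

lemma quotient_hom:
  fixes X :: "'a set" and f :: "('a + 'a \<times> 'a) \<Rightarrow> 'a set" and R :: "'a rel"
  assumes fX: "dialg X f" and R: "equiv X R" and c: "bisim_conds X f R"
  shows "\<exists>(Y :: 'a set set) g h. dialg Y g \<and> dhom X f Y g h \<and> R = kernel X h"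
proof -
  define h where "h = (\<lambda>x. R``{x})"
  define rep where "rep = (\<lambda>C::'a set. SOME x. x \<in> C)"
  define g where "g = (\<lambda>u. case u of Inl C \<Rightarrow> h ` f (Inl (rep C))
                    | Inr (C, D) \<Rightarrow> h ` f (Inr (rep C, rep D)))"
  have rep: "(x, rep (h x)) \<in> R" if "x \<in> X" for x
  proof -
    have "x \<in> h x" using equiv_class_self[OF R that] by (simp add: h_def)
    then have "rep (h x) \<in> h x" unfolding rep_def by (rule someI)
    then show ?thesis by (simp add: h_def)
  qed
  have sym: "(y, x) \<in> R" if "(x,y) \<in> R" for x y
    using R that unfolding equiv_def sym_def by blast
  have repX: "rep (h x) \<in> X" if "x \<in> X" for x
    using rep[OF that] R by (auto dest: equiv_type)
  have dh: "dhom X f (X//R) g h"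
    unfolding dhom_def
  proof (intro conjI ballI)
    fix x assume "x \<in> X" then show "h x \<in> X//R" by (simp add: h_def quotientI)
  next
    fix u assume "u \<in> Fset X"
    then consider x where "x \<in> X" "u = Inl x" | x y where "x \<in> X" "y \<in> X" "u = Inr (x,y)"
      by (auto simp: Fset_def)
    then show "g (Fmap h u) = h ` f u"
    proof cases
      case 1
      have "g (Fmap h u) = h ` f (Inl (rep (h x)))" using 1 by (simp add: g_def Fmap_def)
      also have "\<dots> = h ` f (Inl x)"
        using quot_img_Inl[OF fX R c rep[OF 1(1)]] quot_img_Inl[OF fX R c sym[OF rep[OF 1(1)]]]
        by (simp add: h_def)
      finally show ?thesis using 1 by simp
    next
      case 2
      have "g (Fmap h u) = h ` f (Inr (rep (h x), rep (h y)))" using 2 by (simp add: g_def Fmap_def)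
      also have "\<dots> = h ` f (Inr (x,y))"
        using quot_img_Inr[OF fX R c rep[OF 2(1)] rep[OF 2(2)]]
          quot_img_Inr[OF fX R c sym[OF rep[OF 2(1)]] sym[OF rep[OF 2(2)]]]
        by (simp add: h_def)
      finally show ?thesis using 2 by simp
    qed
  qed
  have dg: "dialg (X//R) g"
    unfolding dialg_def
  proof
    fix u assume "u \<in> Fset (X//R)"
    then consider x where "x \<in> X" "u = Inl (h x)" | x y where "x \<in> X" "y \<in> X" "u = Inr (h x, h y)"
      by (auto simp: Fset_def h_def elim!: quotientE)
    then show "g u \<subseteq> X//R"
    proof cases
      case 1
      have "f (Inl (rep (h x))) \<subseteq> X" using fX repX[OF 1(1)] by (auto simp: dialg_def Fset_def)
      then show ?thesis using 1 by (auto simp: g_def h_def quotientI)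
    next
      case 2
      have "f (Inr (rep (h x), rep (h y))) \<subseteq> X" using fX repX[OF 2(1)] repX[OF 2(2)]
        by (auto simp: dialg_def Fset_def)
      then show ?thesis using 2 by (auto simp: g_def h_def quotientI)
    qed
  qed
  have "R = kernel X h"
    using R by (auto simp: kernel_def h_def equiv_class_eq_iff)
  with dh dg show ?thesis by blast
qed

definition split_conds :: "'a set \<Rightarrow> (('a + 'a \<times> 'a) \<Rightarrow> 'a set) \<Rightarrow> 'a rel \<Rightarrow> bool" where
  "split_conds X f R \<longleftrightarrow> (\<forall>x1 x2 y z1. (x1, x2) \<in> R \<longrightarrow> y \<in> X \<longrightarrow> z1 \<in> X \<longrightarrow>
     (z1 \<in> f (Inl x1) \<longrightarrow> (\<exists>z2. z2 \<in> f (Inl x2) \<and> (z1, z2) \<in> R)) \<and>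
     (z1 \<in> f (Inr (x1, y)) \<longrightarrow> (\<exists>z2. z2 \<in> f (Inr (x2, y)) \<and> (z1, z2) \<in> R)) \<and>
     (z1 \<in> f (Inr (y, x1)) \<longrightarrow> (\<exists>z2. z2 \<in> f (Inr (y, x2)) \<and> (z1, z2) \<in> R)))"

lemma conds_split:
  assumes "bisim_conds X f R" "Id_on X \<subseteq> R"
  shows "split_conds X f R"
  using assms unfolding bisim_conds_def split_conds_def by blast

lemma trancl_split:
  assumes fX: "dialg X f" and sub: "R \<subseteq> X \<times> X" and s: "split_conds X f R"
  shows "split_conds X f (R\<^sup>+)"
  unfolding split_conds_def
proof (intro allI impI)
  fix x1 x2 y z1
  assume x: "(x1, x2) \<in> R\<^sup>+" and yX: "y \<in> X" and zX: "z1 \<in> X"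
  have inX: "b \<in> X" if "(a,b) \<in> R\<^sup>+" for a b
    using that sub by (induct rule: trancl_induct) auto
  have "\<forall>z1. z1 \<in> X \<longrightarrow>
     (z1 \<in> f (Inl x1) \<longrightarrow> (\<exists>z2. z2 \<in> f (Inl x2) \<and> (z1, z2) \<in> R\<^sup>+)) \<and>
     (z1 \<in> f (Inr (x1, y)) \<longrightarrow> (\<exists>z2. z2 \<in> f (Inr (x2, y)) \<and> (z1, z2) \<in> R\<^sup>+)) \<and>
     (z1 \<in> f (Inr (y, x1)) \<longrightarrow> (\<exists>z2. z2 \<in> f (Inr (y, x2)) \<and> (z1, z2) \<in> R\<^sup>+))"
    using x
  proof (induct rule: trancl_induct)
    case (base b)
    then show ?case using s yX unfolding split_conds_def by blast
  next
    case (step b c)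
    have bX: "b \<in> X" using step(1) inX by blast
    have fb: "f (Inl b) \<subseteq> X" "f (Inr (b,y)) \<subseteq> X" "f (Inr (y,b)) \<subseteq> X"
      using fX bX yX by (auto simp: dialg_def Fset_def)
    show ?case
    proof (intro allI impI conjI)
      fix z1 assume z: "z1 \<in> X"
      {
        assume "z1 \<in> f (Inl x1)"
        then obtain zm where zm: "zm \<in> f (Inl b)" "(z1,zm) \<in> R\<^sup>+" using step(3) z by blast
        then obtain z2 where "z2 \<in> f (Inl c)" "(zm,z2) \<in> R"
          using s step(2) yX fb unfolding split_conds_def by blast
        then show "\<exists>z2. z2 \<in> f (Inl c) \<and> (z1, z2) \<in> R\<^sup>+" using zm by auto
      }
      {
        assume "z1 \<in> f (Inr (x1,y))"
        then obtain zm where zm: "zm \<in> f (Inr (b,y))" "(z1,zm) \<in> R\<^sup>+" using step(3) z by blast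
        then obtain z2 where "z2 \<in> f (Inr (c,y))" "(zm,z2) \<in> R"
          using s step(2) yX fb unfolding split_conds_def by blast
        then show "\<exists>z2. z2 \<in> f (Inr (c,y)) \<and> (z1, z2) \<in> R\<^sup>+" using zm by auto
      }
      {
        assume "z1 \<in> f (Inr (y,x1))"
        then obtain zm where zm: "zm \<in> f (Inr (y,b))" "(z1,zm) \<in> R\<^sup>+" using step(3) z by blast
        then obtain z2 where "z2 \<in> f (Inr (y,c))" "(zm,z2) \<in> R"
          using s step(2) yX fb unfolding split_conds_def by blast
        then show "\<exists>z2. z2 \<in> f (Inr (y,c)) \<and> (z1, z2) \<in> R\<^sup>+" using zm by auto
      }
    qed
  qed
  then show "(z1 \<in> f (Inl x1) \<longrightarrow> (\<exists>z2. z2 \<in> f (Inl x2) \<and> (z1, z2) \<in> R\<^sup>+)) \<and>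
     (z1 \<in> f (Inr (x1, y)) \<longrightarrow> (\<exists>z2. z2 \<in> f (Inr (x2, y)) \<and> (z1, z2) \<in> R\<^sup>+)) \<and>
     (z1 \<in> f (Inr (y, x1)) \<longrightarrow> (\<exists>z2. z2 \<in> f (Inr (y, x2)) \<and> (z1, z2) \<in> R\<^sup>+))" using zX by blast
qed

lemma split_trans_conds:
  assumes fX: "dialg X f" and sub: "R \<subseteq> X \<times> X" and s: "split_conds X f R" and t: "trans R"
  shows "bisim_conds X f R"
  unfolding bisim_conds_def
proof (intro allI impI)
  fix x1 x2 y1 y2 z1
  assume x: "(x1, x2) \<in> R" and y: "(y1, y2) \<in> R" and z: "z1 \<in> X"
  have X: "x1 \<in> X" "x2 \<in> X" "y1 \<in> X" "y2 \<in> X" using x y sub by auto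
  have c1: "z1 \<in> f (Inl x1) \<longrightarrow> (\<exists>z2. z2 \<in> f (Inl x2) \<and> (z1, z2) \<in> R)"
    using s x z X unfolding split_conds_def by blast
  have c2: "z1 \<in> f (Inr (x1, y1)) \<longrightarrow> (\<exists>z2. z2 \<in> f (Inr (x2, y2)) \<and> (z1, z2) \<in> R)"
  proof
    assume z1: "z1 \<in> f (Inr (x1, y1))"
    obtain zm where zm: "zm \<in> f (Inr (x2, y1))" "(z1,zm) \<in> R"
      using s x z X z1 unfolding split_conds_def by blast
    have "zm \<in> X" using zm fX X by (auto simp: dialg_def Fset_def)
    then obtain z2 where "z2 \<in> f (Inr (x2, y2))" "(zm,z2) \<in> R"
      using s y X zm unfolding split_conds_def by blast
    then show "\<exists>z2. z2 \<in> f (Inr (x2, y2)) \<and> (z1, z2) \<in> R"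
      using zm t unfolding trans_def by blast
  qed
  show "(z1 \<in> f (Inl x1) \<longrightarrow> (\<exists>z2. z2 \<in> f (Inl x2) \<and> (z1, z2) \<in> R)) \<and>
       (z1 \<in> f (Inr (x1, y1)) \<longrightarrow> (\<exists>z2. z2 \<in> f (Inr (x2, y2)) \<and> (z1, z2) \<in> R))"
    using c1 c2 by blast
qed

theorem theorem1:
  fixes X :: "'a set" and f :: "('a + 'a \<times> 'a) \<Rightarrow> 'a set" and R :: "'a rel"
  assumes "dialg X f"
  shows "(equiv X R \<longrightarrow>
            ((\<exists>(Y :: 'a set set) g h. dialg Y g \<and> dhom X f Y g h \<and> R = kernel X h)
               \<longleftrightarrow> bisim_conds X f R))
       \<and> (\<forall>(Y :: 'b set) g h. dialg Y g \<and> dhom X f Y g h \<longrightarrow> bisim_conds X f (kernel X h))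
       \<and> (equiv X (dbisim X f) \<and> bisim_conds X f (dbisim X f)
          \<and> (\<forall>S. equiv X S \<and> bisim_conds X f S \<longrightarrow> S \<subseteq> dbisim X f))"
proof -
  note fX = assms
  have P1: "equiv X R \<longrightarrow>
            ((\<exists>(Y :: 'a set set) g h. dialg Y g \<and> dhom X f Y g h \<and> R = kernel X h)
               \<longleftrightarrow> bisim_conds X f R)"
    using kernel_conds[OF fX] quotient_hom[OF fX] by blast
  have P2: "\<forall>(Y :: 'b set) g h. dialg Y g \<and> dhom X f Y g h \<longrightarrow> bisim_conds X f (kernel X h)"
    using kernel_conds[OF fX] by blast
  define D where "D = dbisim X f"
  have maxi: "S \<subseteq> D" if S1: "equiv X S" and S2: "bisim_conds X f S" for S
  proof -
    obtain Y :: "'a set set" and g h where "dialg Y g" "dhom X f Y g h" "S = kernel X h"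
      using quotient_hom[OF fX S1 S2] by blast
    then show ?thesis by (auto simp: D_def dbisim_def kernel_def)
  qed
  have subD: "D \<subseteq> X \<times> X" by (auto simp: D_def dbisim_def)
  have IdD: "Id_on X \<subseteq> D"
  proof -
    have "equiv X (Id_on X)" by (auto simp: equiv_def refl_on_def sym_def trans_def)
    moreover have "bisim_conds X f (Id_on X)"
      using fX by (auto simp: bisim_conds_def dialg_def Fset_def)
    ultimately show ?thesis using maxi by blast
  qed
  have symD: "sym D" by (auto simp: D_def dbisim_def sym_def)
  have sD: "split_conds X f D"
    unfolding split_conds_def
  proof (intro allI impI)
    fix x1 x2 y z1
    assume x: "(x1, x2) \<in> D" and yX: "y \<in> X" and z: "z1 \<in> X"
    then obtain Y :: "'a set set" and g h where hh: "dialg Y g" "dhom X f Y g h" "h x1 = h x2"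
      "x1 \<in> X" "x2 \<in> X"
      by (auto simp: D_def dbisim_def)
    have kD: "kernel X h \<subseteq> D" using hh by (auto simp: D_def dbisim_def kernel_def)
    have "split_conds X f (kernel X h)"
      by (rule conds_split[OF kernel_conds[OF fX hh(2)]]) (auto simp: kernel_def)
    moreover have "(x1,x2) \<in> kernel X h" using hh by (auto simp: kernel_def)
    ultimately show "(z1 \<in> f (Inl x1) \<longrightarrow> (\<exists>z2. z2 \<in> f (Inl x2) \<and> (z1, z2) \<in> D)) \<and>
     (z1 \<in> f (Inr (x1, y)) \<longrightarrow> (\<exists>z2. z2 \<in> f (Inr (x2, y)) \<and> (z1, z2) \<in> D)) \<and>
     (z1 \<in> f (Inr (y, x1)) \<longrightarrow> (\<exists>z2. z2 \<in> f (Inr (y, x2)) \<and> (z1, z2) \<in> D))"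
      using yX z kD unfolding split_conds_def by blast
  qed
  have subT: "D\<^sup>+ \<subseteq> X \<times> X" using subD by (metis trancl_subset_Sigma)
  have eqT: "equiv X (D\<^sup>+)"
    unfolding equiv_def
  proof (intro conjI)
    show "refl_on X (D\<^sup>+)" using subT IdD unfolding refl_on_def by auto
    show "sym (D\<^sup>+)" using symD by (simp add: sym_trancl)
    show "trans (D\<^sup>+)" by (rule trans_trancl)
  qed (use subT in auto)
  have cT: "bisim_conds X f (D\<^sup>+)"
    by (rule split_trans_conds[OF fX subT trancl_split[OF fX subD sD] trans_trancl])
  have "D\<^sup>+ \<subseteq> D" using maxi[OF eqT cT] .
  then have DT: "D = D\<^sup>+" by auto
  show ?thesis using P1 P2 eqT cT maxi DT unfolding D_def by metis
qed

end
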